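(* Let $x_0\in\mathcal{M}_0$ and let $r>0$ with $r<\lambda(x)$. Then $u^{-1}\big(\mathcal{M}\cap\bar B(x,r)\big)$ is connected.
   Context: $E=\mathbb{R}^n$. $\mathcal{M}_0$ is a compact $d$-dimensional $\mathcal{C}^2$ manifold, $u:\mathcal{M}_0\to E$ an immersion, $\mathcal{M}=u(\mathcal{M}_0)$; $\mathcal{M}_0$ carries the metric induced by $u$, whose second fundamental form has operator norm at most $\rho>0$ everywhere. For $x_0,y_0\in\mathcal{M}_0$ write $x=u(x_0)$, $y=u(y_0)$ and $T_y\mathcal{M}=d_{y_0}u(T_{y_0}\mathcal{M}_0)$. Normal reach: $\Lambda(x_0)=\{y_0\in\mathcal{M}_0:\ y_0\neq x_0,\ x-y\perp T_y\mathcal{M}\}$ and $\lambda_0(x_0)=\inf_{y_0\in\Lambda(x_0)}\|x-y\|$; one writes $\lambda(x)$ for $\lambda_0(x_0)$ (if $x$ has several preimages, every preimage has normal reach $0$). $\bar B(x,r)$ is the closed Euclidean ball. *)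

theory Defs
  imports "HOL-Analysis.Analysis" "HOL-Library.Extended_Real"
begin

definition has_2nd_derivs ::
  "'a::euclidean_space set \<Rightarrow> ('a \<Rightarrow> 'b::euclidean_space)
   \<Rightarrow> ('a \<Rightarrow> 'a \<Rightarrow>\<^sub>L 'b) \<Rightarrow> ('a \<Rightarrow> 'a \<Rightarrow>\<^sub>L ('a \<Rightarrow>\<^sub>L 'b)) \<Rightarrow> bool" where
  "has_2nd_derivs S f f' f'' \<longleftrightarrow>
     (\<forall>x\<in>S. (f has_derivative blinfun_apply (f' x)) (at x)) \<and>
     (\<forall>x\<in>S. (f' has_derivative blinfun_apply (f'' x)) (at x)) \<and>
     continuous_on S f''"

definition C2_on :: "'a::euclidean_space set \<Rightarrow> ('a \<Rightarrow> 'b::euclidean_space) \<Rightarrow> bool" where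
  "C2_on S f \<longleftrightarrow> open S \<and> (\<exists>f' f''. has_2nd_derivs S f f' f'')"

definition C2_atlas ::
  "'m::t2_space set \<Rightarrow> ('m set \<times> ('m \<Rightarrow> 'd::euclidean_space)) set \<Rightarrow> bool" where
  "C2_atlas M0 A \<longleftrightarrow>
     (\<forall>(V,\<phi>)\<in>A. openin (top_of_set M0) V \<and> open (\<phi> ` V) \<and>
                 homeomorphism V (\<phi> ` V) \<phi> (inv_into V \<phi>)) \<and>
     M0 \<subseteq> \<Union> (fst ` A) \<and>
     (\<forall>(V,\<phi>)\<in>A. \<forall>(W,\<psi>)\<in>A. C2_on (\<phi> ` (V \<inter> W)) (\<psi> \<circ> inv_into V \<phi>))"

text \<open>Standing assumptions: M0 is a compact C^2 manifold (given by the atlas A),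
  u is a C^2 immersion, and the second fundamental form of the induced metric has
  operator norm at most rho everywhere: in a chart psi = u o phi^-1, the normal
  component of D^2 psi(p)(v,w), i.e. its distance to the tangent space range(D psi(p)),
  is at most rho |D psi(p) v| |D psi(p) w|.\<close>

definition C2_immersion_curv_bound ::
  "'m::t2_space set \<Rightarrow> ('m set \<times> ('m \<Rightarrow> 'd::euclidean_space)) set
   \<Rightarrow> ('m \<Rightarrow> 'e::euclidean_space) \<Rightarrow> real \<Rightarrow> bool" where
  "C2_immersion_curv_bound M0 A u \<rho> \<longleftrightarrow>
     compact M0 \<and> C2_atlas M0 A \<and>
     (\<forall>(V,\<phi>)\<in>A. \<exists>\<psi>' \<psi>''. has_2nd_derivs (\<phi> ` V) (u \<circ> inv_into V \<phi>) \<psi>' \<psi>'' \<and>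
        (\<forall>p\<in>\<phi> ` V. inj (blinfun_apply (\<psi>' p)) \<and>
           (\<forall>v w. infdist (\<psi>'' p v w) (range (\<psi>' p))
                    \<le> \<rho> * norm (\<psi>' p v) * norm (\<psi>' p w))))"

text \<open>Tangent space T_y M = d_{y0} u (T_{y0} M0), computed in any chart around y0
  (all charts give the same space).\<close>

definition tangent_space ::
  "('m set \<times> ('m \<Rightarrow> 'd::euclidean_space)) set \<Rightarrow> ('m \<Rightarrow> 'e::euclidean_space) \<Rightarrow> 'm \<Rightarrow> 'e set" where
  "tangent_space A u y0 =
     \<Union> {range (frechet_derivative (u \<circ> inv_into V \<phi>) (at (\<phi> y0))) | V \<phi>. (V,\<phi>) \<in> A \<and> y0 \<in> V}"

definition normal_set ::
  "'m set \<Rightarrow> ('m set \<times> ('m \<Rightarrow> 'd::euclidean_space)) set \<Rightarrow> ('m \<Rightarrow> 'e::euclidean_space) \<Rightarrow> 'm \<Rightarrow> 'm set" where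
  "normal_set M0 A u x0 =
     {y0 \<in> M0. y0 \<noteq> x0 \<and> (\<forall>t\<in>tangent_space A u y0. (u x0 - u y0) \<bullet> t = 0)}"

text \<open>Normal reach lambda_0(x0) = inf of |x - y| over normal_set; +infinity if empty.\<close>

definition normal_reach ::
  "'m set \<Rightarrow> ('m set \<times> ('m \<Rightarrow> 'd::euclidean_space)) set \<Rightarrow> ('m \<Rightarrow> 'e::euclidean_space) \<Rightarrow> 'm \<Rightarrow> ereal" where
  "normal_reach M0 A u x0 = (INF y0\<in>normal_set M0 A u x0. ereal (dist (u x0) (u y0)))"

end

theory Submission
  imports Defs
begin

lemma u_cont:
  assumes "C2_immersion_curv_bound M0 A u \<rho>"
  shows "continuous_on M0 u"
proof -
  have at: "C2_atlas M0 A" using assms unfolding C2_immersion_curv_bound_def by auto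
  have loc: "continuous (at y within M0) u" if "y \<in> M0" for y
  proof -
    obtain V \<phi> where Vp: "(V,\<phi>) \<in> A" "y \<in> V" proof -
      have "M0 \<subseteq> \<Union> (fst ` A)" using at unfolding C2_atlas_def by blast
      then obtain P where "P \<in> A" "y \<in> fst P" using \<open>y \<in> M0\<close> by blast
      then show ?thesis using that by (metis prod.collapse)
    qed
    have op: "openin (top_of_set M0) V" and hom: "homeomorphism V (\<phi> ` V) \<phi> (inv_into V \<phi>)"
      using at Vp unfolding C2_atlas_def by (auto dest!: bspec[OF _ Vp(1)])
    obtain \<psi>' \<psi>'' where h2: "has_2nd_derivs (\<phi> ` V) (u \<circ> inv_into V \<phi>) \<psi>' \<psi>''"
      using assms Vp unfolding C2_immersion_curv_bound_def by (smt (verit) case_prodD)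
    have "continuous_on (\<phi> ` V) (u \<circ> inv_into V \<phi>)"
      using h2 unfolding has_2nd_derivs_def
      by (meson has_derivative_continuous has_derivative_at_withinI continuous_at_imp_continuous_on)
    moreover have "continuous_on V \<phi>" using hom homeomorphism_def by blast
    ultimately have "continuous_on V ((u \<circ> inv_into V \<phi>) \<circ> \<phi>)"
      using continuous_on_compose by blast
    moreover have "\<And>z. z \<in> V \<Longrightarrow> ((u \<circ> inv_into V \<phi>) \<circ> \<phi>) z = u z"
      using hom by (simp add: homeomorphism_def)
    ultimately have cV: "continuous_on V u" using continuous_on_cong by force
    obtain T where T: "open T" "V = M0 \<inter> T" using op openin_open by blast
    have "continuous (at y within V) u" using cV Vp(2)
      by (simp add: continuous_on_eq_continuous_within)
    moreover have "at y within V = at y within M0"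
      by (rule at_within_nhd[of y T]) (use T Vp(2) in auto)
    ultimately show ?thesis by simp
  qed
  show ?thesis unfolding continuous_on_eq_continuous_within using loc by blast
qed

lemma crit:
  assumes "C2_immersion_curv_bound M0 A u \<rho>"
    and E2: "E2 \<subseteq> M0" and y: "y \<in> E2"
    and min: "\<And>z. z \<in> E2 \<Longrightarrow> dist (u y) c \<le> dist (u z) c"
    and conn: "\<And>K. connected K \<Longrightarrow> K \<subseteq> M0 \<Longrightarrow> y \<in> K \<Longrightarrow> (\<forall>z\<in>K. dist (u z) c \<le> dist (u y) c) \<Longrightarrow> K \<subseteq> E2"
    and t: "t \<in> tangent_space A u y"
  shows "(c - u y) \<bullet> t = 0"
proof -
  have at: "C2_atlas M0 A" using assms(1) unfolding C2_immersion_curv_bound_def by auto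
  obtain V \<phi> where Vp: "(V,\<phi>) \<in> A" "y \<in> V"
      and tr: "t \<in> range (frechet_derivative (u \<circ> inv_into V \<phi>) (at (\<phi> y)))"
    using t unfolding tangent_space_def by blast
  define \<psi> where "\<psi> = u \<circ> inv_into V \<phi>"
  define p where "p = \<phi> y"
  define U where "U = \<phi> ` V"
  have op: "openin (top_of_set M0) V" and hom: "homeomorphism V U \<phi> (inv_into V \<phi>)"
      and oU: "open U"
    using at Vp unfolding C2_atlas_def U_def by (auto dest!: bspec[OF _ Vp(1)])
  obtain \<psi>' \<psi>'' where h2: "has_2nd_derivs U \<psi> \<psi>' \<psi>''"
    using assms(1) Vp unfolding C2_immersion_curv_bound_def U_def \<psi>_def by (smt (verit) case_prodD)
  have pU: "p \<in> U" unfolding p_def U_def using Vp by blast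
  have dpsi: "(\<psi> has_derivative blinfun_apply (\<psi>' p)) (at p)"
    using h2 pU unfolding has_2nd_derivs_def by blast
  define D where "D = blinfun_apply (\<psi>' p)"
  have Deq: "frechet_derivative \<psi> (at p) = D"
    using frechet_derivative_at[OF dpsi] unfolding D_def by simp
  obtain w where tw: "t = D w" using tr Deq unfolding \<psi>_def p_def by auto
  have VM: "V \<subseteq> M0" using op by (simp add: openin_imp_subset)
  have inv_phi: "inv_into V \<phi> (\<phi> z) = z" if "z \<in> V" for z
    using hom that unfolding homeomorphism_def by blast
  have psip: "\<psi> p = u y" unfolding \<psi>_def p_def using inv_phi Vp(2) by simp
  have key: "\<not> ((u y - c) \<bullet> D v < 0)" for v
  proof
    assume neg: "(u y - c) \<bullet> D v < 0"
    define h where "h = (\<lambda>s::real. (\<psi> (p + s *\<^sub>R v) - c) \<bullet> (\<psi> (p + s *\<^sub>R v) - c))"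
    have dl: "((\<lambda>s::real. p + s *\<^sub>R v) has_derivative (\<lambda>s. s *\<^sub>R v)) (at 0)"
      by (auto intro!: derivative_eq_intros)
    have dc: "((\<lambda>s::real. \<psi> (p + s *\<^sub>R v)) has_derivative (\<lambda>s. D (s *\<^sub>R v))) (at 0)"
      using has_derivative_compose[OF dl, of \<psi> D] dpsi unfolding D_def by simp
    have dc2: "((\<lambda>s::real. \<psi> (p + s *\<^sub>R v) - c) has_derivative (\<lambda>s. D (s *\<^sub>R v))) (at 0)"
      using has_derivative_diff[OF dc has_derivative_const[of c]] by simp
    have "(h has_derivative (\<lambda>s. (\<psi> (p + 0 *\<^sub>R v) - c) \<bullet> D (s *\<^sub>R v) + D (s *\<^sub>R v) \<bullet> (\<psi> (p + 0 *\<^sub>R v) - c))) (at 0)"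
      unfolding h_def by (rule has_derivative_inner[OF dc2 dc2])
    then have "(h has_derivative (\<lambda>s. (2 * ((u y - c) \<bullet> D v)) * s)) (at 0)"
      by (rule has_derivative_eq_rhs) (auto simp: fun_eq_iff psip D_def blinfun.scaleR_right inner_commute algebra_simps)
    then have "(h has_real_derivative (2 * ((u y - c) \<bullet> D v))) (at 0)"
      by (simp add: has_field_derivative_def)
    from DERIV_neg_dec_right[OF this] neg obtain d1 where d1: "d1 > 0" "\<And>s. s > 0 \<Longrightarrow> s < d1 \<Longrightarrow> h 0 > h (0 + s)"
      by force
    obtain e where e: "e > 0" "ball p e \<subseteq> U" using oU pU open_contains_ball by blast
    define \<delta> where "\<delta> = min (d1/2) (e / (norm v + 1) / 2)"
    have dpos: "\<delta> > 0" proof -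
      have "norm v + 1 > 0" by (simp add: add_nonneg_pos)
      then have "e / (norm v + 1) / 2 > 0" using e(1) by simp
      then show ?thesis unfolding \<delta>_def using d1 by linarith
    qed
    have lineU: "p + s *\<^sub>R v \<in> U" if "s \<in> {0..\<delta>}" for s
    proof -
      have "s * norm v \<le> (e / (norm v + 1) / 2) * norm v"
        using that unfolding \<delta>_def by (intro mult_right_mono) auto
      also have "\<dots> < e"
      proof -
        have np: "norm v + 1 > 0" by (simp add: add_nonneg_pos)
        have "e / (norm v + 1) / 2 * norm v = (e * norm v) / (2*(norm v + 1))" by (simp add: field_simps)
        moreover have ineq: "e * norm v < e * (2*(norm v + 1))" 
        proof (rule mult_strict_left_mono)
          show "norm v < 2*(norm v+1)" using norm_ge_zero[of v] by (smt (verit))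
          show "0 < e" by (rule e(1))
        qed
        moreover have np2: "2*(norm v+1) > 0" using np by simp
        moreover have "(e*norm v)/(2*(norm v+1)) < e"
          by (subst pos_divide_less_eq[OF np2]) (metis mult.commute ineq)
        ultimately show ?thesis by metis
      qed
      finally have "norm (s *\<^sub>R v) < e" using that by simp
      then show ?thesis using e(2) by (auto simp: dist_norm)
    qed
    define \<gamma> where "\<gamma> = (\<lambda>s::real. inv_into V \<phi> (p + s *\<^sub>R v))"
    define K where "K = \<gamma> ` {0..\<delta>}"
    have cinv: "continuous_on U (inv_into V \<phi>)" using hom homeomorphism_def by blast
    have invU: "inv_into V \<phi> ` U \<subseteq> V" using hom homeomorphism_def by blast
    have "continuous_on {0..\<delta>} \<gamma>"
      unfolding \<gamma>_def
      by (rule continuous_on_compose2[OF cinv]) (auto intro!: continuous_intros lineU)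
    then have cK: "connected K" unfolding K_def by (rule connected_continuous_image) simp
    have "K \<subseteq> inv_into V \<phi> ` U" unfolding K_def \<gamma>_def using lineU by auto
    then have KM: "K \<subseteq> M0" using invU VM by blast
    have uga: "u (\<gamma> s) = \<psi> (p + s *\<^sub>R v)" for s unfolding \<gamma>_def \<psi>_def by simp
    have hd: "dist (u (\<gamma> s)) c ^ 2 = h s" for s
      unfolding uga h_def dist_norm by (simp add: power2_norm_eq_inner)
    have h0: "h 0 = dist (u y) c ^ 2" using hd[of 0] unfolding uga by (simp add: psip)
    have lt: "dist (u (\<gamma> s)) c < dist (u y) c" if "s > 0" "s \<le> \<delta>" for s
    proof -
      have "s < d1" using that d1 unfolding \<delta>_def by linarith
      then have "h s < h 0" using d1(2)[of s] that by simp
      then have "dist (u (\<gamma> s)) c ^ 2 < dist (u y) c ^ 2" using hd h0 by simp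
      then show ?thesis by (simp add: power_less_imp_less_base)
    qed
    have yg: "y = \<gamma> 0" unfolding \<gamma>_def p_def using inv_phi Vp(2) by simp
    have yK: "y \<in> K" unfolding K_def using yg dpos by auto
    have "\<forall>z\<in>K. dist (u z) c \<le> dist (u y) c"
    proof
      fix z assume "z \<in> K"
      then obtain s where s: "s \<in> {0..\<delta>}" "z = \<gamma> s" unfolding K_def by blast
      show "dist (u z) c \<le> dist (u y) c"
      proof (cases "s = 0")
        case True then show ?thesis using s yg by simp
      next
        case False then show ?thesis using lt[of s] s by auto
      qed
    qed
    then have "K \<subseteq> E2" using conn cK KM yK by blast
    then have "\<gamma> \<delta> \<in> E2" unfolding K_def using dpos by auto
    then have "dist (u y) c \<le> dist (u (\<gamma> \<delta>)) c" by (rule min)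
    then show False using lt[of \<delta>] dpos by simp
  qed
  have Dneg: "D (- w) = - D w" unfolding D_def by (simp add: blinfun.minus_right)
  have "\<not> ((u y - c) \<bullet> D w < 0)" "\<not> ((u y - c) \<bullet> D (-w) < 0)" using key by blast+
  then have "(u y - c) \<bullet> D w = 0" unfolding Dneg by simp
  then show ?thesis unfolding tw by (simp add: inner_diff_left)
qed

theorem lemma2p6:
  fixes M0 :: "'m::t2_space set"
    and A :: "('m set \<times> ('m \<Rightarrow> 'd::euclidean_space)) set"
    and u :: "'m \<Rightarrow> 'e::euclidean_space"
    and \<rho> r :: real and x0 :: 'm
  assumes "C2_immersion_curv_bound M0 A u \<rho>"
    and "\<rho> > 0"
    and "x0 \<in> M0"
    and "r > 0"
    and "ereal r < normal_reach M0 A u x0"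
  shows "connected {y0 \<in> M0. u y0 \<in> cball (u x0) r}"
proof (rule ccontr)
  define S where "S = {y0 \<in> M0. u y0 \<in> cball (u x0) r}"
  assume "\<not> connected {y0 \<in> M0. u y0 \<in> cball (u x0) r}"
  then obtain E1 E2 where E: "closedin (top_of_set S) E1" "closedin (top_of_set S) E2"
     "E1 \<union> E2 = S" "E1 \<inter> E2 = {}" "E1 \<noteq> {}" "E2 \<noteq> {}"
    unfolding connected_closedin_eq S_def by blast
  have cu: "continuous_on M0 u" using u_cont assms(1) by blast
  have cM: "compact M0" using assms(1) unfolding C2_immersion_curv_bound_def by blast
  have "closedin (top_of_set M0) (M0 \<inter> u -` cball (u x0) r)"
    using continuous_closedin_preimage[OF cu] by blast
  moreover have "S = M0 \<inter> u -` cball (u x0) r" unfolding S_def by auto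
  ultimately have cS: "compact S" using closedin_compact[OF cM] by metis
  have x0S: "x0 \<in> S" unfolding S_def using assms(3,4) by auto
  obtain F1 F2 where F: "closedin (top_of_set S) F2" "F1 \<union> F2 = S" "F1 \<inter> F2 = {}" "F2 \<noteq> {}" "x0 \<in> F1" "closedin (top_of_set S) F1"
  proof (cases "x0 \<in> E1")
    case True show ?thesis by (rule that[of E2 E1, OF E(2) E(3) E(4) E(6) True E(1)])
  next
    case False
    have a: "x0 \<in> E2" using x0S E(3) False by blast
    have b: "E2 \<union> E1 = S" "E2 \<inter> E1 = {}" using E(3,4) by blast+
    show ?thesis by (rule that[of E1 E2, OF E(1) b(1) b(2) E(5) a E(2)])
  qed
  have cF2: "compact F2" using closedin_compact[OF cS F(1)] .
  have F2S: "F2 \<subseteq> S" using F(2) by blast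
  have SM: "S \<subseteq> M0" unfolding S_def by blast
  have "continuous_on F2 (\<lambda>z. dist (u z) (u x0))"
    using F2S SM cu by (intro continuous_intros) (auto intro: continuous_on_subset)
  then obtain y where y: "y \<in> F2" "\<And>z. z \<in> F2 \<Longrightarrow> dist (u y) (u x0) \<le> dist (u z) (u x0)"
    using continuous_attains_inf[OF cF2 F(4)] by blast
  have conn: "K \<subseteq> F2" if K: "connected K" "K \<subseteq> M0" "y \<in> K" "\<forall>z\<in>K. dist (u z) (u x0) \<le> dist (u y) (u x0)" for K
  proof -
    have dy: "dist (u x0) (u y) \<le> r" using y(1) F2S unfolding S_def by auto
    have KS: "K \<subseteq> S"
    proof
      fix z assume z: "z \<in> K"
      then have "dist (u x0) (u z) \<le> r" using K(4) dy by (metis dist_commute order_trans)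
      then show "z \<in> S" using K(2) z unfolding S_def by auto
    qed
    obtain C1 where C1: "closed C1" "F1 = S \<inter> C1" using F(6) closedin_closed by metis
    obtain C2 where C2: "closed C2" "F2 = S \<inter> C2" using F(1) closedin_closed by metis
    have "closedin (top_of_set K) (K \<inter> C1)" using C1(1) closedin_closed_Int by blast
    moreover have "closedin (top_of_set K) (K \<inter> C2)" using C2(1) closedin_closed_Int by blast
    moreover have "(K \<inter> C1) \<union> (K \<inter> C2) = K" using KS F(2) C1 C2 by blast
    moreover have "(K \<inter> C1) \<inter> (K \<inter> C2) = {}" using KS F(3) C1 C2 by blast
    moreover have "K \<inter> C2 \<noteq> {}" using K(3) y(1) C2 by blast
    ultimately have "K \<inter> C1 = {}" using K(1) unfolding connected_closedin_eq by blast
    then show ?thesis using KS F(2) C1 C2 by blast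
  qed
  have "(u x0 - u y) \<bullet> t = 0" if "t \<in> tangent_space A u y" for t
    using crit[OF assms(1) _ y(1) y(2) conn that] F2S SM by blast
  moreover have "y \<noteq> x0" using F y by blast
  moreover have "y \<in> M0" using y(1) F2S SM by blast
  ultimately have "y \<in> normal_set M0 A u x0" unfolding normal_set_def by blast
  then have "normal_reach M0 A u x0 \<le> ereal (dist (u x0) (u y))"
    unfolding normal_reach_def by (rule INF_lower)
  moreover have "dist (u x0) (u y) \<le> r" using y(1) F2S unfolding S_def by auto
  then have "ereal (dist (u x0) (u y)) \<le> ereal r" by simp
  ultimately show False using assms(5) by (meson leD order_trans)
qed
end
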